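(* Let $\mu$ be a nonzero finite Borel measure on $\mathbb{T}$, and let $\Gamma_1,\Gamma_2,\dots$ be subsets of $\mathbb{T}$ such that each $\Gamma_n$ is a union of intervals of level $n$ (these intervals are called marked). Suppose there is $K>0$ such that for every positive integer $n$ and every interval $I$ of level $n$, $$\mu(I\cap\Gamma_{n+1})\ \ge\ K\,\mu(I).$$ Then for $\mu$-a.e. $x\in\mathbb{T}$ the following holds: for every positive integer $d$ there exists $n\ge 0$ such that the balls $B_{n+1}(x),B_{n+2}(x),\dots,B_{n+d}(x)$ are all marked, i.e. $B_{n+k}(x)\subseteq\Gamma_{n+k}$ for $k=1,\dots,d$.
   Context: Fix an integer $m\ge 2$ and let $\mathbb{T}=\{0,1,\dots,m-1\}^{\mathbb{N}}$ be the set of infinite sequences with entries in $\{0,\dots,m-1\}$, with metric $d(a,b)=m^{-n(a,b)+1}$ where $n(a,b)$ is the first index at which distinct $a,b$ differ. For an integer $n\ge0$ and $x\in\mathbb{T}$, $B_n(x)=B(x,m^{-n})$ is the set of sequences agreeing with $x$ in the first $n$ positions; these sets are the intervals of level $n$, and the intervals of level $n$ partition $\mathbb{T}$. *)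

theory Defs
  imports "HOL-Probability.Probability"
begin

definition seqspace :: "nat \<Rightarrow> (nat \<Rightarrow> nat) set" where
  "seqspace m = {x. \<forall>i. x i < m}"

definition ival :: "nat \<Rightarrow> nat \<Rightarrow> (nat \<Rightarrow> nat) \<Rightarrow> (nat \<Rightarrow> nat) set" where
  "ival m n x = {y \<in> seqspace m. \<forall>i<n. y i = x i}"

definition seq_open :: "nat \<Rightarrow> (nat \<Rightarrow> nat) set \<Rightarrow> bool" where
  "seq_open m U \<longleftrightarrow> U \<subseteq> seqspace m \<and> (\<forall>x\<in>U. \<exists>n. ival m n x \<subseteq> U)"

definition seq_borel :: "nat \<Rightarrow> (nat \<Rightarrow> nat) measure" where
  "seq_borel m = sigma (seqspace m) {U. seq_open m U}"

definition union_of_level :: "nat \<Rightarrow> nat \<Rightarrow> (nat \<Rightarrow> nat) set \<Rightarrow> bool" where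
  "union_of_level m n G \<longleftrightarrow> G \<subseteq> seqspace m \<and> (\<forall>x\<in>G. ival m n x \<subseteq> G)"

end

theory Submission
  imports Defs
begin

lemma ival_mono: "a \<le> b \<Longrightarrow> ival m b x \<subseteq> ival m a x"
  by (auto simp: ival_def)

lemma ival_same: "y \<in> ival m n x \<Longrightarrow> ival m n y = ival m n x"
  by (auto simp: ival_def)

lemma self_ival: "x \<in> seqspace m \<Longrightarrow> x \<in> ival m n x"
  by (auto simp: ival_def)

lemma uol_mono: "union_of_level m a G \<Longrightarrow> a \<le> b \<Longrightarrow> union_of_level m b G"
  unfolding union_of_level_def using ival_mono by blast

lemma uol_Diff: "union_of_level m n A \<Longrightarrow> union_of_level m n B \<Longrightarrow> union_of_level m n (A - B)"
  unfolding union_of_level_def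
proof safe
  fix x y assume AB: "A \<subseteq> seqspace m" "\<forall>x\<in>A. ival m n x \<subseteq> A" "\<forall>x\<in>B. ival m n x \<subseteq> B"
    and x: "x \<in> A" "x \<notin> B" and y: "y \<in> ival m n x"
  show "y \<in> A" using AB x y by blast
  assume "y \<in> B"
  then have "ival m n y \<subseteq> B" using AB by blast
  moreover have "x \<in> ival m n y" using ival_same[OF y] self_ival AB x by blast
  ultimately show False using x by blast
qed auto

lemma uol_open: "union_of_level m n G \<Longrightarrow> seq_open m G"
  unfolding union_of_level_def seq_open_def by blast

lemma uol_finite: "finite ((\<lambda>x. ival m n x) ` (seqspace m))"
proof -
  have "(\<lambda>x. ival m n x) ` (seqspace m) \<subseteq> (\<lambda>f. ival m n f) ` ({..<n} \<rightarrow>\<^sub>E {..<m})"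
  proof
    fix I assume "I \<in> (\<lambda>x. ival m n x) ` (seqspace m)"
    then obtain x where x: "x \<in> seqspace m" "I = ival m n x" by blast
    have "ival m n x = ival m n (restrict x {..<n})" by (auto simp: ival_def)
    moreover have "restrict x {..<n} \<in> {..<n} \<rightarrow>\<^sub>E {..<m}" using x by (auto simp: seqspace_def)
    ultimately show "I \<in> (\<lambda>f. ival m n f) ` ({..<n} \<rightarrow>\<^sub>E {..<m})" using x by blast
  qed
  then show ?thesis by (rule finite_subset) (intro finite_imageI finite_PiE; simp)
qed

theorem lemma2:
  fixes m :: nat and \<mu> :: "(nat \<Rightarrow> nat) measure"
    and \<Gamma> :: "nat \<Rightarrow> (nat \<Rightarrow> nat) set" and K :: real
  assumes "m \<ge> 2"
    and "sets \<mu> = sets (seq_borel m)"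
    and "finite_measure \<mu>"
    and "emeasure \<mu> (space \<mu>) \<noteq> 0"
    and "\<And>n. n \<ge> 1 \<Longrightarrow> union_of_level m n (\<Gamma> n)"
    and "K > 0"
    and "\<And>n x. n \<ge> 1 \<Longrightarrow> x \<in> seqspace m \<Longrightarrow>
           measure \<mu> (ival m n x \<inter> \<Gamma> (n + 1)) \<ge> K * measure \<mu> (ival m n x)"
  shows "AE x in \<mu>. \<forall>d::nat. d \<ge> 1 \<longrightarrow>
           (\<exists>n::nat. \<forall>k\<in>{1..d}. ival m (n + k) x \<subseteq> \<Gamma> (n + k))"
proof -
  interpret finite_measure \<mu> by fact
  have sub: "{U. seq_open m U} \<subseteq> Pow (seqspace m)" by (auto simp: seq_open_def)
  have sp: "space \<mu> = seqspace m"
    using sets_eq_imp_space_eq[OF assms(2)] by (simp add: seq_borel_def space_measure_of_conv)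
  have meas: "G \<in> sets \<mu>" if "union_of_level m n G" for n G
    using uol_open[OF that] assms(2) sets_measure_of[OF sub] unfolding seq_borel_def
    by (auto intro: sigma_sets.Basic)
  have L1: "measure \<mu> (A \<inter> \<Gamma> (n+1)) \<ge> K * measure \<mu> A"
    if n: "n \<ge> 1" and A: "union_of_level m n A" for n A
  proof -
    define S where "S = (\<lambda>x. ival m n x) ` A"
    have As: "A \<subseteq> seqspace m" using A by (simp add: union_of_level_def)
    have fin: "finite S" unfolding S_def using uol_finite finite_subset image_mono[OF As] by blast
    have Ssets: "\<And>I. I \<in> S \<Longrightarrow> union_of_level m n I"
      unfolding S_def union_of_level_def using ival_same by (fastforce simp: ival_def)
    have disj: "disjoint_family_on (\<lambda>I. I) S"
      unfolding disjoint_family_on_def S_def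
      by (metis (no_types, lifting) disjoint_iff image_iff ival_same)
    have disj2: "disjoint_family_on (\<lambda>I. I \<inter> \<Gamma> (n+1)) S"
      using disj unfolding disjoint_family_on_def by blast
    have AU: "A = (\<Union>I\<in>S. I)" unfolding S_def using A As self_ival
      by (auto simp: union_of_level_def) blast
    have AU2: "A \<inter> \<Gamma> (n+1) = (\<Union>I\<in>S. I \<inter> \<Gamma> (n+1))" using AU by blast
    have G: "\<Gamma> (n+1) \<in> sets \<mu>" using meas assms(5) by simp
    have m1: "measure \<mu> A = (\<Sum>I\<in>S. measure \<mu> I)"
      apply (subst AU) apply (rule finite_measure_finite_Union[OF fin _ disj])
      using meas Ssets by blast
    have m2: "measure \<mu> (A \<inter> \<Gamma> (n+1)) = (\<Sum>I\<in>S. measure \<mu> (I \<inter> \<Gamma> (n+1)))"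
      apply (subst AU2) apply (rule finite_measure_finite_Union[OF fin _ disj2])
      using meas Ssets G by blast
    have "K * measure \<mu> A = (\<Sum>I\<in>S. K * measure \<mu> I)" by (simp add: m1 sum_distrib_left)
    also have "\<dots> \<le> (\<Sum>I\<in>S. measure \<mu> (I \<inter> \<Gamma> (n+1)))"
      apply (rule sum_mono) unfolding S_def using assms(7) n As by blast
    finally show ?thesis using m2 by simp
  qed
  define G where "G n d = {y \<in> seqspace m. \<forall>k\<in>{1..d}. y \<in> \<Gamma> (n+k)}" for n d
  have uolG: "union_of_level m (n+d) (A \<inter> G n d)" if "union_of_level m n A" for n d A
    unfolding union_of_level_def
  proof safe
    fix x y assume x: "x \<in> A" "x \<in> G n d" and y: "y \<in> ival m (n+d) x"
    show "y \<in> A" using that x y ival_mono[of n "n+d" m x] unfolding union_of_level_def by auto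
    show "y \<in> G n d" unfolding G_def
    proof safe
      show "y \<in> seqspace m" using y by (simp add: ival_def)
      fix k assume k: "k \<in> {1..d}"
      have "x \<in> \<Gamma> (n+k)" using x k by (simp add: G_def)
      moreover have "y \<in> ival m (n+k) x" using y ival_mono[of "n+k" "n+d"] k by auto
      ultimately show "y \<in> \<Gamma> (n+k)" using assms(5)[of "n+k"] k unfolding union_of_level_def by auto
    qed
  qed (use that in \<open>auto simp: union_of_level_def\<close>)
  have uolS: "union_of_level m n (seqspace m)" for n
    by (auto simp: union_of_level_def ival_def)
  have Gd: "G n d = seqspace m \<inter> G n d" for n d by (auto simp: G_def)
  have uolG': "union_of_level m (n+d) (G n d)" for n d using uolG[OF uolS] Gd by metis
  have L2: "measure \<mu> (A \<inter> G n d) \<ge> K^d * measure \<mu> A"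
    if n: "n \<ge> 1" and A: "union_of_level m n A" for n A d
  proof (induction d)
    case 0
    have "A \<inter> G n 0 = A" using A by (auto simp: G_def union_of_level_def)
    then show ?case by simp
  next
    case (Suc d)
    have e: "A \<inter> G n (Suc d) = (A \<inter> G n d) \<inter> \<Gamma> (n+d+1)"
      proof -
      have "{1..Suc d} = insert (Suc d) {1..d}" by auto
      then show ?thesis unfolding G_def by auto
    qed
    have "K^(Suc d) * measure \<mu> A = K * (K^d * measure \<mu> A)" by simp
    also have "\<dots> \<le> K * measure \<mu> (A \<inter> G n d)" using Suc assms(6) by simp
    also have "\<dots> \<le> measure \<mu> (A \<inter> G n (Suc d))"
      unfolding e by (rule L1) (use n uolG[OF A] in auto)
    finally show ?case .
  qed
  have main: "AE x in \<mu>. d \<ge> 1 \<longrightarrow>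
           (\<exists>n::nat. \<forall>k\<in>{1..d}. ival m (n + k) x \<subseteq> \<Gamma> (n + k))" for d
  proof (cases "d \<ge> 1")
    case False then show ?thesis by simp
  next
    case d: True
    define c where "c = K^d"
    define q where "q = 1 - min c 1"
    have c: "c > 0" using assms(6) by (simp add: c_def)
    have q: "0 \<le> q" "q < 1" using c by (auto simp: q_def)
    have L3: "measure \<mu> (A - G n d) \<le> q * measure \<mu> A"
      if n: "n \<ge> 1" and A: "union_of_level m n A" for n A
    proof -
      have "measure \<mu> (A - G n d) = measure \<mu> A - measure \<mu> (A \<inter> G n d)"
        by (rule finite_measure_Diff') (use meas A uolG' in blast)+
      also have "\<dots> \<le> (1 - c) * measure \<mu> A" using L2[OF n A, of d] by (simp add: c_def algebra_simps)
      also have "\<dots> \<le> q * measure \<mu> A" by (rule mult_right_mono) (auto simp: q_def)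
      finally show ?thesis .
    qed
    define F where "F = rec_nat (seqspace m) (\<lambda>j X. X - G (1+j*d) d)"
    have F0: "F 0 = seqspace m" and FS: "F (Suc j) = F j - G (1+j*d) d" for j
      by (simp_all add: F_def)
    have uolF: "union_of_level m (1+j*d) (F j)" for j
    proof (induction j)
      case 0 then show ?case using uolS by (simp add: F0)
    next
      case (Suc j)
      have "union_of_level m (1+j*d+d) (F j)" using Suc uol_mono by fastforce
      moreover have "union_of_level m (1+j*d+d) (G (1+j*d) d)" by (rule uolG')
      ultimately have "union_of_level m (1+j*d+d) (F (Suc j))" unfolding FS by (rule uol_Diff)
      then show ?case by (simp add: add.commute add.left_commute)
    qed
    have mF: "measure \<mu> (F j) \<le> q^j * measure \<mu> (space \<mu>)" for j
    proof (induction j)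
      case 0 then show ?case by (simp add: F0 sp)
    next
      case (Suc j)
      have "measure \<mu> (F (Suc j)) \<le> q * measure \<mu> (F j)" unfolding FS
        by (rule L3) (use uolF in auto)
      also have "\<dots> \<le> q * (q^j * measure \<mu> (space \<mu>))" using Suc q by (intro mult_left_mono) auto
      finally show ?case by simp
    qed
    define N where "N = (\<Inter>j. F j)"
    have Ns: "N \<in> sets \<mu>" unfolding N_def using meas uolF by blast
    have NF: "measure \<mu> N \<le> q^j * measure \<mu> (space \<mu>)" for j
    proof -
      have "measure \<mu> N \<le> measure \<mu> (F j)"
        by (rule finite_measure_mono) (use meas uolF N_def in auto)
      then show ?thesis using mF[of j] by linarith
    qed
    have lim: "(\<lambda>j. q^j * measure \<mu> (space \<mu>)) \<longlonglongrightarrow> 0"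
      using LIMSEQ_power_zero[of q] q by (auto intro: tendsto_mult_left_zero)
    have "measure \<mu> N \<le> 0" by (rule LIMSEQ_le_const[OF lim]) (use NF in auto)
    then have "emeasure \<mu> N = 0" using emeasure_eq_measure measure_nonneg[of \<mu> N] by simp
    then have Nnull: "N \<in> null_sets \<mu>" using Ns by auto
    show ?thesis
    proof (rule AE_I'[OF Nnull], rule subsetI)
      fix x assume xx: "x \<in> {x \<in> space \<mu>. \<not> (d \<ge> 1 \<longrightarrow>
           (\<exists>n::nat. \<forall>k\<in>{1..d}. ival m (n + k) x \<subseteq> \<Gamma> (n + k)))}"
      then have x: "x \<in> space \<mu>" and nP: "\<not> (d \<ge> 1 \<longrightarrow>
           (\<exists>n::nat. \<forall>k\<in>{1..d}. ival m (n + k) x \<subseteq> \<Gamma> (n + k)))" by auto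
      have xs: "x \<in> seqspace m" using x sp by simp
      have nG: "x \<notin> G n d" for n
      proof
        assume "x \<in> G n d"
        then have "\<forall>k\<in>{1..d}. ival m (n + k) x \<subseteq> \<Gamma> (n + k)"
          using assms(5) unfolding G_def union_of_level_def by auto
        then show False using nP by blast
      qed
      have "x \<in> F j" for j by (induction j) (use xs nG in \<open>auto simp: F0 FS\<close>)
      then show "x \<in> N" by (simp add: N_def)
    qed
  qed
  show ?thesis by (subst AE_all_countable) (use main in blast)
qed

end
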